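(* Let $X$ be a compact Hausdorff space. Then the locale $MO(C(X))$ is isomorphic to (the locale of opens of) $X$.
   Context: For a unital C*-algebra $A$, $\mathcal{C}(A)$ is the set of commutative unital C*-subalgebras ordered by inclusion, $\Sigma(C)$ the Gelfand spectrum, $r_{D,C}:\Sigma(D)\to\Sigma(C)$ restriction for $C\subseteq D$. $MO(A)$ is the locale presented by the poset of pairs $(C,u)$, $C\in\mathcal{C}(A)$, $u$ open in $\Sigma(C)$, with $(D,v)\le(C,u)$ iff $C\subseteq D$ and $v\subseteq r_{D,C}^{-1}(u)$, and covering $(C,u)\lhd\{(D_i,v_i)\}_{i\in I}$ iff $C\subseteq D_i$ for all $i$ and for every $D\in\mathcal{C}(A)$ with $C\subseteq D$ there is $i$ with $D\subseteq D_i$ and $r_{D_i,C}^{-1}(u)\subseteq\bigcup\{r_{D_i,D_j}^{-1}(v_j): D_j\subseteq D_i\}$ (frame = down-closed subsets closed under the covering). *)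

theory Defs
  imports "HOL-Analysis.Analysis"
begin

text \<open>Elements of C(X) are continuous complex functions on the topological space X,
  represented as total functions that vanish outside topspace X (so that the pointwise
  algebra operations below stay within the carrier).\<close>

definition CX :: "'a topology \<Rightarrow> ('a \<Rightarrow> complex) set" where
  "CX X = {f. continuous_map X euclidean f \<and> (\<forall>x. x \<notin> topspace X \<longrightarrow> f x = 0)}"

definition one_CX :: "'a topology \<Rightarrow> 'a \<Rightarrow> complex" where
  "one_CX X = (\<lambda>x. if x \<in> topspace X then 1 else 0)"

text \<open>Commutative unital C*-subalgebras of C(X): subsets containing the unit of C(X),
  closed under the *-algebra operations and closed in the supremum norm.
  (Commutativity is automatic since C(X) is commutative.)\<close>

definition csubalg :: "'a topology \<Rightarrow> ('a \<Rightarrow> complex) set \<Rightarrow> bool" where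
  "csubalg X C \<longleftrightarrow>
     C \<subseteq> CX X \<and>
     one_CX X \<in> C \<and>
     (\<forall>f\<in>C. \<forall>g\<in>C. (\<lambda>x. f x + g x) \<in> C) \<and>
     (\<forall>f\<in>C. \<forall>g\<in>C. (\<lambda>x. f x * g x) \<in> C) \<and>
     (\<forall>c. \<forall>f\<in>C. (\<lambda>x. c * f x) \<in> C) \<and>
     (\<forall>f\<in>C. (\<lambda>x. cnj (f x)) \<in> C) \<and>
     (\<forall>f\<in>CX X. (\<forall>e>0. \<exists>g\<in>C. \<forall>x\<in>topspace X. norm (f x - g x) < e) \<longrightarrow> f \<in> C)"

definition CC :: "'a topology \<Rightarrow> ('a \<Rightarrow> complex) set set" where
  "CC X = {C. csubalg X C}"

text \<open>Characters of C: linear, multiplicative, unital functionals on C; represented as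
  functions that are undefined outside C (as in product_topology).\<close>

definition Spec :: "'a topology \<Rightarrow> ('a \<Rightarrow> complex) set \<Rightarrow> (('a \<Rightarrow> complex) \<Rightarrow> complex) set" where
  "Spec X C = {\<phi>. \<phi> \<in> extensional C \<and>
      (\<forall>f\<in>C. \<forall>g\<in>C. \<phi> (\<lambda>x. f x + g x) = \<phi> f + \<phi> g) \<and>
      (\<forall>c. \<forall>f\<in>C. \<phi> (\<lambda>x. c * f x) = c * \<phi> f) \<and>
      (\<forall>f\<in>C. \<forall>g\<in>C. \<phi> (\<lambda>x. f x * g x) = \<phi> f * \<phi> g) \<and>
      \<phi> (one_CX X) = 1}"

text \<open>Gelfand topology = weak-* topology = topology of pointwise convergence on C.\<close>

definition gelfand_top :: "'a topology \<Rightarrow> ('a \<Rightarrow> complex) set \<Rightarrow> (('a \<Rightarrow> complex) \<Rightarrow> complex) topology" where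
  "gelfand_top X C = subtopology (product_topology (\<lambda>_. euclidean) C) (Spec X C)"

definition rpre :: "'a topology \<Rightarrow> ('a \<Rightarrow> complex) set \<Rightarrow> ('a \<Rightarrow> complex) set
     \<Rightarrow> (('a \<Rightarrow> complex) \<Rightarrow> complex) set \<Rightarrow> (('a \<Rightarrow> complex) \<Rightarrow> complex) set" where
  "rpre X D C u = {\<phi> \<in> Spec X D. restrict \<phi> C \<in> u}"

type_synonym 'a mopair = "('a \<Rightarrow> complex) set \<times> (('a \<Rightarrow> complex) \<Rightarrow> complex) set"

definition MOpairs :: "'a topology \<Rightarrow> 'a mopair set" where
  "MOpairs X = {(C, u). C \<in> CC X \<and> openin (gelfand_top X C) u}"

definition MOle :: "'a topology \<Rightarrow> 'a mopair \<Rightarrow> 'a mopair \<Rightarrow> bool" where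
  "MOle X p q \<longleftrightarrow> (case p of (D, v) \<Rightarrow> case q of (C, u) \<Rightarrow> C \<subseteq> D \<and> v \<subseteq> rpre X D C u)"

text \<open>Covering relation (C,u) \<lhd> F, F a family of pairs (given as a set).  Besides the
  clause from the paper, a generator with empty open u is covered by the empty family.\<close>

definition MOcov :: "'a topology \<Rightarrow> 'a mopair \<Rightarrow> 'a mopair set \<Rightarrow> bool" where
  "MOcov X p F \<longleftrightarrow> (case p of (C, u) \<Rightarrow>
     ((\<forall>(Di, vi)\<in>F. C \<subseteq> Di) \<and>
      (\<forall>D\<in>CC X. C \<subseteq> D \<longrightarrow>
         (\<exists>(Di, vi)\<in>F. D \<subseteq> Di \<and>
            rpre X Di C u \<subseteq> \<Union>{rpre X Di Dj vj | Dj vj. (Dj, vj) \<in> F \<and> Dj \<subseteq> Di})))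
     \<or> (u = {} \<and> F = {}))"

definition MOframe :: "'a topology \<Rightarrow> 'a mopair set set" where
  "MOframe X = {I. I \<subseteq> MOpairs X \<and>
      (\<forall>q\<in>I. \<forall>p\<in>MOpairs X. MOle X p q \<longrightarrow> p \<in> I) \<and>
      (\<forall>p\<in>MOpairs X. \<forall>F. F \<subseteq> I \<longrightarrow> MOcov X p F \<longrightarrow> p \<in> I)}"

text \<open>Isomorphism of locales = isomorphism of frames = order isomorphism of the underlying
  (complete) lattices, here ordered by inclusion.\<close>

definition frame_iso :: "'b set set \<Rightarrow> 'c set set \<Rightarrow> bool" where
  "frame_iso L M \<longleftrightarrow> (\<exists>h. bij_betw h L M \<and> (\<forall>I\<in>L. \<forall>J\<in>L. I \<subseteq> J \<longleftrightarrow> h I \<subseteq> h J))"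

end

theory Submission
  imports Defs
begin

lemma cm_cmult:
  fixes f g :: "'a \<Rightarrow> complex"
  shows "continuous_map X euclidean f \<Longrightarrow> continuous_map X euclidean g \<Longrightarrow> continuous_map X euclidean (\<lambda>x. f x * g x)"
  by (simp add: continuous_map_atin tendsto_mult)

lemma cm_cnj:
  fixes f :: "'a \<Rightarrow> complex"
  shows "continuous_map X euclidean f \<Longrightarrow> continuous_map X euclidean (\<lambda>x. cnj (f x))"
  by (simp add: continuous_map_atin tendsto_cnj)

lemma cm_inv:
  fixes f :: "'a \<Rightarrow> complex"
  shows "continuous_map X euclidean f \<Longrightarrow> (\<And>x. x \<in> topspace X \<Longrightarrow> f x \<noteq> 0) \<Longrightarrow> continuous_map X euclidean (\<lambda>x. inverse (f x))"
  by (simp add: continuous_map_atin tendsto_inverse)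

lemma cm_ofreal:
  fixes f :: "'a \<Rightarrow> real"
  shows "continuous_map X euclidean f \<Longrightarrow> continuous_map X euclidean (\<lambda>x. complex_of_real (f x))"
  by (simp add: continuous_map_atin tendsto_of_real)

lemma cm_cut:
  "continuous_map X euclidean f \<Longrightarrow> continuous_map X euclidean (\<lambda>x. if x \<in> topspace X then f x else g x)"
  by (rule continuous_map_eq) auto

lemma CX_add: "f \<in> CX X \<Longrightarrow> g \<in> CX X \<Longrightarrow> (\<lambda>x. f x + g x) \<in> CX X"
  by (auto simp: CX_def intro: continuous_map_add)

lemma CX_mult: "f \<in> CX X \<Longrightarrow> g \<in> CX X \<Longrightarrow> (\<lambda>x. f x * g x) \<in> CX X"
  by (auto simp: CX_def intro: cm_cmult)

lemma CX_smult: "f \<in> CX X \<Longrightarrow> (\<lambda>x. c * f x) \<in> CX X"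
  by (auto simp: CX_def intro: cm_cmult)

lemma CX_cnj: "f \<in> CX X \<Longrightarrow> (\<lambda>x. cnj (f x)) \<in> CX X"
  by (auto simp: CX_def intro: cm_cnj)

lemma CX_one: "one_CX X \<in> CX X"
proof -
  have "continuous_map X euclidean (\<lambda>x. if x \<in> topspace X then (1::complex) else 0)"
    by (rule cm_cut) simp
  then show ?thesis by (simp add: CX_def one_CX_def)
qed

lemma CX_in_CC: "CX X \<in> CC X"
  by (auto simp: CC_def csubalg_def CX_add CX_mult CX_smult CX_cnj CX_one)

lemma CC_sub: "C \<in> CC X \<Longrightarrow> C \<subseteq> CX X"
  by (simp add: CC_def csubalg_def)

lemma topspace_gelfand: "topspace (gelfand_top X C) = Spec X C"
  by (auto simp: gelfand_top_def Spec_def PiE_def)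

lemma restrict_Spec:
  assumes "\<phi> \<in> Spec X D" "C \<subseteq> D" "C \<in> CC X"
  shows "restrict \<phi> C \<in> Spec X C"
proof -
  have c: "csubalg X C" using assms(3) by (simp add: CC_def)
  show ?thesis using assms(1,2) c unfolding Spec_def csubalg_def
    by (auto simp: subset_iff)
qed

lemma restrict_cont:
  assumes "C \<subseteq> D" "C \<in> CC X"
  shows "continuous_map (gelfand_top X D) (gelfand_top X C) (\<lambda>\<phi>. restrict \<phi> C)"
proof -
  let ?T = "subtopology (product_topology (\<lambda>_. euclidean) D) (Spec X D)"
  have "\<forall>k\<in>C. continuous_map ?T euclidean (\<lambda>x. restrict x C k)"
  proof
    fix k assume k: "k \<in> C"
    have "continuous_map ?T euclidean (\<lambda>x. x k)"
      by (rule continuous_map_from_subtopology) (use k assms(1) in \<open>auto intro: continuous_map_product_projection\<close>)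
    then show "continuous_map ?T euclidean (\<lambda>x. restrict x C k)"
      using k by simp
  qed
  then have 1: "continuous_map ?T (product_topology (\<lambda>_. euclidean) C) (\<lambda>\<phi>. restrict \<phi> C)"
    unfolding continuous_map_componentwise by auto
  have 2: "(\<lambda>\<phi>. restrict \<phi> C) ` topspace ?T \<subseteq> Spec X C"
    using restrict_Spec[OF _ assms] by (auto simp add: image_subset_iff)
  show ?thesis unfolding gelfand_top_def continuous_map_in_subtopology using 1 2 by blast
qed

lemma rpre_open:
  assumes "openin (gelfand_top X C) u" "C \<subseteq> D" "C \<in> CC X"
  shows "openin (gelfand_top X D) (rpre X D C u)"
proof -
  have "openin (gelfand_top X D) {x \<in> topspace (gelfand_top X D). restrict x C \<in> u}"
    using openin_continuous_map_preimage[OF restrict_cont[OF assms(2,3)] assms(1)] .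
  then show ?thesis by (simp add: rpre_def topspace_gelfand)
qed

lemma rpre_id: "w \<subseteq> Spec X A \<Longrightarrow> rpre X A A w = w"
  by (auto simp: rpre_def Spec_def extensional_restrict)

lemma rpre_trans: "C \<subseteq> D \<Longrightarrow> D \<in> CC X \<Longrightarrow> v \<subseteq> rpre X D C u \<Longrightarrow> rpre X A D v \<subseteq> rpre X A C u"
proof
  fix t assume a: "C \<subseteq> D" "D \<in> CC X" "v \<subseteq> rpre X D C u" "t \<in> rpre X A D v"
  then have "restrict (restrict t D) C \<in> u" by (auto simp: rpre_def)
  moreover have "restrict (restrict t D) C = restrict t C" using a(1) by (simp add: Int_absorb1)
  ultimately show "t \<in> rpre X A C u" using a(4) by (simp add: rpre_def)
qed

lemma MOpairs_open: "(C,u) \<in> MOpairs X \<Longrightarrow> openin (gelfand_top X (CX X)) (rpre X (CX X) C u)"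
  by (auto simp: MOpairs_def intro!: rpre_open CC_sub)

lemma frame_part: "frame_iso (MOframe X) {U. openin (gelfand_top X (CX X)) U}"
proof -
  define A where "A = CX X"
  define G where "G = gelfand_top X A"
  define Phi where "Phi I = \<Union>{rpre X A C u | C u. (C,u) \<in> I}" for I :: "'a mopair set"
  define Psi where "Psi U = {(C,u) \<in> MOpairs X. rpre X A C u \<subseteq> U}" for U
  have ACC: "A \<in> CC X" by (simp add: A_def CX_in_CC)
  have sub: "C \<in> CC X \<Longrightarrow> C \<subseteq> A" for C by (simp add: A_def CC_sub)
  have ro: "(C,u) \<in> MOpairs X \<Longrightarrow> openin G (rpre X A C u)" for C u
    using MOpairs_open A_def G_def by blast
  have PhiO: "openin G (Phi I)" if "I \<in> MOframe X" for I
  proof -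
    have "I \<subseteq> MOpairs X" using that by (simp add: MOframe_def)
    then show ?thesis unfolding Phi_def using ro by (auto intro!: openin_Union)
  qed
  have PsiF: "Psi U \<in> MOframe X" if U: "openin G U" for U
  proof -
    have "Psi U \<subseteq> MOpairs X" by (auto simp: Psi_def)
    moreover have "\<forall>q\<in>Psi U. \<forall>p\<in>MOpairs X. MOle X p q \<longrightarrow> p \<in> Psi U"
    proof (intro ballI impI)
      fix q p assume q: "q \<in> Psi U" and p: "p \<in> MOpairs X" and le: "MOle X p q"
      obtain C u where qq: "q = (C,u)" by (cases q)
      obtain D v where pp: "p = (D,v)" by (cases p)
      have "D \<in> CC X" using p pp by (simp add: MOpairs_def)
      then have "rpre X A D v \<subseteq> rpre X A C u"
        using le qq pp by (intro rpre_trans) (auto simp: MOle_def)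
      then show "p \<in> Psi U" using q qq pp p by (auto simp: Psi_def)
    qed
    moreover have "\<forall>p\<in>MOpairs X. \<forall>F. F \<subseteq> Psi U \<longrightarrow> MOcov X p F \<longrightarrow> p \<in> Psi U"
    proof (intro ballI allI impI)
      fix p F assume p: "p \<in> MOpairs X" and F: "F \<subseteq> Psi U" and cov: "MOcov X p F"
      obtain C u where pp: "p = (C,u)" by (cases p)
      have CCC: "C \<in> CC X" using p pp by (simp add: MOpairs_def)
      have "rpre X A C u \<subseteq> U"
      proof (cases "u = {} \<and> F = {}")
        case True then show ?thesis by (simp add: rpre_def)
      next
        case False
        then have "\<forall>D\<in>CC X. C \<subseteq> D \<longrightarrow>
         (\<exists>(Di, vi)\<in>F. D \<subseteq> Di \<and>
            rpre X Di C u \<subseteq> \<Union>{rpre X Di Dj vj | Dj vj. (Dj, vj) \<in> F \<and> Dj \<subseteq> Di})"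
          using cov pp False unfolding MOcov_def by (simp only: prod.case) blast
        then have "C \<subseteq> A \<longrightarrow> (\<exists>(Di, vi)\<in>F. A \<subseteq> Di \<and>
            rpre X Di C u \<subseteq> \<Union>{rpre X Di Dj vj | Dj vj. (Dj, vj) \<in> F \<and> Dj \<subseteq> Di})"
          using ACC by (rule bspec)
        then have "\<exists>(Di, vi)\<in>F. A \<subseteq> Di \<and>
            rpre X Di C u \<subseteq> \<Union>{rpre X Di Dj vj | Dj vj. (Dj, vj) \<in> F \<and> Dj \<subseteq> Di}"
          using sub[OF CCC] by (rule mp)
        then obtain q where "q \<in> F" and "case q of (Di, vi) \<Rightarrow> A \<subseteq> Di \<and>
            rpre X Di C u \<subseteq> \<Union>{rpre X Di Dj vj | Dj vj. (Dj, vj) \<in> F \<and> Dj \<subseteq> Di}"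
          by (rule bexE)
        then obtain Di vi where Fi: "(Di,vi) \<in> F" and "A \<subseteq> Di"
           and cv: "rpre X Di C u \<subseteq> \<Union>{rpre X Di Dj vj | Dj vj. (Dj, vj) \<in> F \<and> Dj \<subseteq> Di}"
          by (cases q) simp
        have "Di \<in> CC X" using Fi F by (auto simp: Psi_def MOpairs_def)
        then have "Di = A" using sub \<open>A \<subseteq> Di\<close> by blast
        show ?thesis
        proof
          fix t assume "t \<in> rpre X A C u"
          then obtain Dj vj where "(Dj,vj) \<in> F" "t \<in> rpre X A Dj vj"
            using cv \<open>Di = A\<close> by blast
          then show "t \<in> U" using F by (auto simp: Psi_def)
        qed
      qed
      then show "p \<in> Psi U" using p pp by (simp add: Psi_def)
    qed
    ultimately show ?thesis by (simp add: MOframe_def)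
  qed
  have PhiPsi: "Phi (Psi U) = U" if U: "openin G U" for U
  proof
    show "Phi (Psi U) \<subseteq> U" by (auto simp: Phi_def Psi_def)
    have US: "U \<subseteq> Spec X A" using openin_subset[OF U] by (simp add: G_def topspace_gelfand)
    have "(A,U) \<in> MOpairs X" using ACC U by (simp add: MOpairs_def G_def)
    then have "(A,U) \<in> Psi U" using rpre_id[OF US] by (simp add: Psi_def)
    then show "U \<subseteq> Phi (Psi U)" using rpre_id[OF US] unfolding Phi_def by blast
  qed
  have PsiPhi: "Psi (Phi I) = I" if I: "I \<in> MOframe X" for I
  proof
    have IM: "I \<subseteq> MOpairs X" using I by (simp add: MOframe_def)
    then show "I \<subseteq> Psi (Phi I)" by (auto simp: Psi_def Phi_def)
    have down: "\<And>q p. q \<in> I \<Longrightarrow> p \<in> MOpairs X \<Longrightarrow> MOle X p q \<Longrightarrow> p \<in> I"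
      using I by (simp add: MOframe_def)
    have covc: "\<And>p F. p \<in> MOpairs X \<Longrightarrow> F \<subseteq> I \<Longrightarrow> MOcov X p F \<Longrightarrow> p \<in> I"
      using I unfolding MOframe_def by blast
    have AE: "(A,{}) \<in> MOpairs X" using ACC by (simp add: MOpairs_def)
    have AEI: "(A,{}) \<in> I" by (rule covc[OF AE, of "{}"]) (auto simp: MOcov_def)
    show "Psi (Phi I) \<subseteq> I"
    proof
      fix p assume p: "p \<in> Psi (Phi I)"
      obtain C u where pp: "p = (C,u)" by (cases p)
      have pM: "p \<in> MOpairs X" and ss: "rpre X A C u \<subseteq> Phi I" using p pp by (auto simp: Psi_def)
      have CCC: "C \<in> CC X" using pM pp by (simp add: MOpairs_def)
      define F where "F = insert (A,{}) {(A, rpre X A D v) | D v. (D,v) \<in> I}"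
      have FI: "F \<subseteq> I"
      proof
        fix q assume "q \<in> F"
        then consider "q = (A,{})" | D v where "q = (A, rpre X A D v)" "(D,v) \<in> I"
          unfolding F_def by blast
        then show "q \<in> I"
        proof cases
          case 1 then show ?thesis using AEI by simp
        next
          case 2
          have DM: "(D,v) \<in> MOpairs X" using 2 IM by blast
          then have "D \<in> CC X" by (simp add: MOpairs_def)
          have "q \<in> MOpairs X" using 2 ro[OF DM] ACC by (simp add: MOpairs_def G_def)
          moreover have "MOle X q (D,v)" using 2 sub[OF \<open>D \<in> CC X\<close>] by (simp add: MOle_def)
          ultimately show ?thesis using down 2 by blast
        qed
      qed
      have "MOcov X p F"
      proof -
        have "\<forall>(Di, vi)\<in>F. C \<subseteq> Di" using sub[OF CCC] by (auto simp: F_def)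
        moreover have "rpre X A C u \<subseteq> \<Union>{rpre X A Dj vj | Dj vj. (Dj, vj) \<in> F \<and> Dj \<subseteq> A}"
        proof
          fix t assume "t \<in> rpre X A C u"
          then obtain D v where Dv: "(D,v) \<in> I" "t \<in> rpre X A D v" using ss unfolding Phi_def by blast
          have "rpre X A D v \<subseteq> Spec X A" by (auto simp: rpre_def)
          then have "t \<in> rpre X A A (rpre X A D v)" using Dv rpre_id by metis
          moreover have "(A, rpre X A D v) \<in> F" using Dv by (auto simp: F_def)
          ultimately show "t \<in> \<Union>{rpre X A Dj vj | Dj vj. (Dj, vj) \<in> F \<and> Dj \<subseteq> A}" by blast
        qed
        then have "\<forall>D\<in>CC X. C \<subseteq> D \<longrightarrow>
         (\<exists>(Di, vi)\<in>F. D \<subseteq> Di \<and>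
            rpre X Di C u \<subseteq> \<Union>{rpre X Di Dj vj | Dj vj. (Dj, vj) \<in> F \<and> Dj \<subseteq> Di})"
          using sub unfolding F_def by blast
        ultimately show ?thesis using pp by (simp add: MOcov_def)
      qed
      then show "p \<in> I" using covc[OF pM FI] by blast
    qed
  qed
  have bij: "bij_betw Phi (MOframe X) {U. openin G U}"
    by (rule bij_betw_byWitness[where f'=Psi]) (use PhiO PsiF PhiPsi PsiPhi in auto)
  have "\<forall>I\<in>MOframe X. \<forall>J\<in>MOframe X. I \<subseteq> J \<longleftrightarrow> Phi I \<subseteq> Phi J"
  proof (intro ballI iffI)
    fix I J assume "I \<in> MOframe X" "J \<in> MOframe X" "I \<subseteq> J"
    then show "Phi I \<subseteq> Phi J" unfolding Phi_def by blast
  next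
    fix I J assume IJ: "I \<in> MOframe X" "J \<in> MOframe X" "Phi I \<subseteq> Phi J"
    then have "Psi (Phi I) \<subseteq> Psi (Phi J)" unfolding Psi_def by blast
    then show "I \<subseteq> J" using PsiPhi IJ by simp
  qed
  then show ?thesis using bij unfolding frame_iso_def G_def A_def by blast
qed


section \<open>Characters of C(X) are point evaluations\<close>

lemma CX_zero: "(\<lambda>x. 0) \<in> CX X"
  by (simp add: CX_def)

lemma Spec_add: "\<phi> \<in> Spec X C \<Longrightarrow> f \<in> C \<Longrightarrow> g \<in> C \<Longrightarrow> \<phi> (\<lambda>x. f x + g x) = \<phi> f + \<phi> g"
  by (simp add: Spec_def)

lemma Spec_zero:
  assumes "\<phi> \<in> Spec X (CX X)" shows "\<phi> (\<lambda>x. 0) = 0"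
proof -
  have "\<phi> (\<lambda>x. 0 * one_CX X x) = 0 * \<phi> (one_CX X)"
    using assms CX_one unfolding Spec_def by blast
  then show ?thesis by simp
qed

lemma Spec_sum:
  assumes "\<phi> \<in> Spec X (CX X)" "finite S"
  shows "(\<forall>i\<in>S. k i \<in> CX X) \<longrightarrow> (\<lambda>y. \<Sum>i\<in>S. k i y) \<in> CX X \<and> \<phi> (\<lambda>y. \<Sum>i\<in>S. k i y) = (\<Sum>i\<in>S. \<phi> (k i))"
  using assms(2)
proof induct
  case empty
  then show ?case using Spec_zero[OF assms(1)] CX_zero by simp
next
  case (insert a S)
  show ?case
  proof
    assume k: "\<forall>i\<in>insert a S. k i \<in> CX X"
    then have IH: "(\<lambda>y. \<Sum>i\<in>S. k i y) \<in> CX X" "\<phi> (\<lambda>y. \<Sum>i\<in>S. k i y) = (\<Sum>i\<in>S. \<phi> (k i))"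
      using insert by auto
    have ka: "k a \<in> CX X" using k by simp
    have eq: "(\<lambda>y. \<Sum>i\<in>insert a S. k i y) = (\<lambda>y. k a y + (\<Sum>i\<in>S. k i y))"
      using insert by simp
    have "\<phi> (\<lambda>y. k a y + (\<Sum>i\<in>S. k i y)) = \<phi> (k a) + \<phi> (\<lambda>y. \<Sum>i\<in>S. k i y)"
      using assms(1) ka IH(1) by (rule Spec_add)
    then show "(\<lambda>y. \<Sum>i\<in>insert a S. k i y) \<in> CX X \<and> \<phi> (\<lambda>y. \<Sum>i\<in>insert a S. k i y) = (\<Sum>i\<in>insert a S. \<phi> (k i))"
      using eq IH insert CX_add[OF ka IH(1)] by simp
  qed
qed

lemma char_eval:
  assumes comp: "compact_space X" and phi: "\<phi> \<in> Spec X (CX X)"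
  shows "\<exists>x\<in>topspace X. \<forall>f\<in>CX X. \<phi> f = f x"
proof (rule ccontr)
  assume "\<not> ?thesis"
  then have "\<forall>x\<in>topspace X. \<exists>f. f \<in> CX X \<and> \<phi> f \<noteq> f x" by blast
  then obtain fx where fx: "\<And>x. x \<in> topspace X \<Longrightarrow> fx x \<in> CX X \<and> \<phi> (fx x) \<noteq> fx x x"
    by metis
  have add: "\<And>f g. f \<in> CX X \<Longrightarrow> g \<in> CX X \<Longrightarrow> \<phi> (\<lambda>x. f x + g x) = \<phi> f + \<phi> g"
   and sm: "\<And>c f. f \<in> CX X \<Longrightarrow> \<phi> (\<lambda>x. c * f x) = c * \<phi> f"
   and mu: "\<And>f g. f \<in> CX X \<Longrightarrow> g \<in> CX X \<Longrightarrow> \<phi> (\<lambda>x. f x * g x) = \<phi> f * \<phi> g"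
   and one: "\<phi> (one_CX X) = 1"
    using phi unfolding Spec_def by blast+
  define g where "g x = (\<lambda>y. fx x y + (- \<phi> (fx x)) * one_CX X y)" for x
  have gC: "g x \<in> CX X" if "x \<in> topspace X" for x
    unfolding g_def using fx[OF that] by (intro CX_add CX_smult CX_one) auto
  have gphi: "\<phi> (g x) = 0" if "x \<in> topspace X" for x
  proof -
    have "\<phi> (g x) = \<phi> (fx x) + \<phi> (\<lambda>y. (- \<phi> (fx x)) * one_CX X y)"
      unfolding g_def using fx[OF that] by (intro add CX_smult CX_one) auto
    moreover have "\<phi> (\<lambda>y. (- \<phi> (fx x)) * one_CX X y) = - \<phi> (fx x)"
      using sm[OF CX_one, of "- \<phi> (fx x)"] one by (simp only: mult_1_right)
    ultimately show ?thesis by simp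
  qed
  have gx: "g x x \<noteq> 0" if "x \<in> topspace X" for x
    using fx[OF that] that by (auto simp: g_def one_CX_def)
  define h where "h x = (\<lambda>y. g x y * cnj (g x y))" for x
  have hC: "h x \<in> CX X" if "x \<in> topspace X" for x
    unfolding h_def using gC[OF that] by (intro CX_mult CX_cnj)
  have hphi: "\<phi> (h x) = 0" if "x \<in> topspace X" for x
    unfolding h_def using gC[OF that] gphi[OF that] by (simp add: mu CX_cnj)
  have hRe: "Re (h x y) = (cmod (g x y))^2" for x y
    by (simp add: h_def complex_mult_cnj cmod_power2)
  define W where "W x = {y \<in> topspace X. g x y \<in> - {0}}" for x
  have Wo: "openin X (W x)" if "x \<in> topspace X" for x
  proof -
    have "continuous_map X euclidean (g x)" using gC[OF that] by (simp add: CX_def)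
    then show ?thesis unfolding W_def by (rule openin_continuous_map_preimage) auto
  qed
  have "topspace X \<subseteq> \<Union>(W ` topspace X)" using gx by (auto simp: W_def)
  then obtain FF where FF: "finite FF" "FF \<subseteq> W ` topspace X" "topspace X \<subseteq> \<Union>FF"
    using comp Wo unfolding compact_space_alt by (metis (no_types, lifting) imageE)
  then obtain S where S: "S \<subseteq> topspace X" "finite S" "FF = W ` S"
    using finite_subset_image by metis
  define H where "H = (\<lambda>y. \<Sum>i\<in>S. h i y)"
  have HS: "H \<in> CX X \<and> \<phi> H = (\<Sum>i\<in>S. \<phi> (h i))"
    using Spec_sum[OF phi S(2), of h] hC S(1) unfolding H_def by auto
  then have HC: "H \<in> CX X" and Hphi: "\<phi> H = 0" using hphi S(1) by (auto intro!: sum.neutral)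
  have Hnz: "H y \<noteq> 0" if y: "y \<in> topspace X" for y
  proof -
    obtain i where i: "i \<in> S" "y \<in> W i" using FF(3) S(3) y by auto
    have "0 < (\<Sum>j\<in>S. Re (h j y))"
      using S(2) i by (intro sum_pos2[where i=i]) (auto simp: hRe W_def)
    then have "Re (H y) \<noteq> 0" by (simp add: H_def Re_sum)
    then show ?thesis by auto
  qed
  define Hi where "Hi = (\<lambda>y. if y \<in> topspace X then inverse (H y) else 0)"
  have HiC: "Hi \<in> CX X"
  proof -
    have "continuous_map X euclidean H" using HC by (simp add: CX_def)
    then have "continuous_map X euclidean (\<lambda>y. inverse (H y))" using Hnz by (rule cm_inv)
    then have "continuous_map X euclidean Hi" unfolding Hi_def by (rule cm_cut)
    then show ?thesis by (simp add: CX_def Hi_def)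
  qed
  have "(\<lambda>y. H y * Hi y) = one_CX X"
    using Hnz by (auto simp: Hi_def one_CX_def)
  then have "\<phi> (one_CX X) = \<phi> H * \<phi> Hi" using mu[OF HC HiC] by simp
  then show False using one Hphi by simp
qed

lemma separate:
  assumes "compact_space X" "Hausdorff_space X" "x \<in> topspace X" "y \<in> topspace X" "x \<noteq> y"
  shows "\<exists>f\<in>CX X. f x \<noteq> f y"
proof -
  have N: "normal_space X" using assms(1,2) compact_Hausdorff_or_regular_imp_normal_space by blast
  obtain f where f: "continuous_map X (top_of_set {0..1::real}) f" "f ` {x} \<subseteq> {0}" "f ` {y} \<subseteq> {1}"
    using Urysohn_lemma[OF N closedin_Hausdorff_singleton[OF assms(2,3)]
        closedin_Hausdorff_singleton[OF assms(2,4)], of 0 1] assms(5) by auto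
  have "continuous_map X euclidean f" using f(1) continuous_map_in_subtopology by blast
  then have "continuous_map X euclidean (\<lambda>z. complex_of_real (f z))" by (rule cm_ofreal)
  then have "continuous_map X euclidean (\<lambda>z. if z \<in> topspace X then complex_of_real (f z) else 0)"
    by (rule cm_cut)
  then have "(\<lambda>z. if z \<in> topspace X then complex_of_real (f z) else 0) \<in> CX X" by (simp add: CX_def)
  moreover have "f x = 0" "f y = 1" using f by auto
  ultimately show ?thesis using assms(3,4)
    by (intro bexI[of _ "\<lambda>z. if z \<in> topspace X then complex_of_real (f z) else 0"]) auto
qed


section \<open>Gelfand spectrum of C(X) is X\<close>

lemma ev_Spec: "x \<in> topspace X \<Longrightarrow> restrict (\<lambda>f. f x) (CX X) \<in> Spec X (CX X)"
  using CX_one[of X] by (simp add: Spec_def CX_add CX_smult CX_mult one_CX_def)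

lemma ev_cont: "continuous_map X (gelfand_top X (CX X)) (\<lambda>x. restrict (\<lambda>f. f x) (CX X))"
proof -
  have "\<forall>k\<in>CX X. continuous_map X euclidean (\<lambda>x. restrict (\<lambda>f. f x) (CX X) k)"
    by (simp add: CX_def)
  then have "continuous_map X (product_topology (\<lambda>_. euclidean) (CX X)) (\<lambda>x. restrict (\<lambda>f. f x) (CX X))"
    unfolding continuous_map_componentwise by auto
  then show ?thesis unfolding gelfand_top_def continuous_map_in_subtopology
    using ev_Spec by auto
qed

lemma frame_iso_trans: "frame_iso L M \<Longrightarrow> frame_iso M N \<Longrightarrow> frame_iso L N"
proof -
  assume a1: "frame_iso L M" and a2: "frame_iso M N"
  obtain h where h: "bij_betw h L M" "\<forall>I\<in>L. \<forall>J\<in>L. I \<subseteq> J \<longleftrightarrow> h I \<subseteq> h J"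
    using a1 unfolding frame_iso_def by (elim exE conjE) (rule that)
  obtain k where k: "bij_betw k M N" "\<forall>I\<in>M. \<forall>J\<in>M. I \<subseteq> J \<longleftrightarrow> k I \<subseteq> k J"
    using a2 unfolding frame_iso_def by (elim exE conjE) (rule that)
  have "bij_betw (k \<circ> h) L N" using h(1) k(1) by (rule bij_betw_trans)
  moreover have "\<forall>I\<in>L. \<forall>J\<in>L. I \<subseteq> J \<longleftrightarrow> (k \<circ> h) I \<subseteq> (k \<circ> h) J"
  proof (intro ballI)
    fix I J assume IJ: "I \<in> L" "J \<in> L"
    then have hM: "h I \<in> M" "h J \<in> M" using bij_betw_apply[OF h(1)] by auto
    have 1: "I \<subseteq> J \<longleftrightarrow> h I \<subseteq> h J" using bspec[OF bspec[OF h(2) IJ(1)] IJ(2)] .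
    have 2: "h I \<subseteq> h J \<longleftrightarrow> k (h I) \<subseteq> k (h J)" using bspec[OF bspec[OF k(2) hM(1)] hM(2)] .
    show "I \<subseteq> J \<longleftrightarrow> (k \<circ> h) I \<subseteq> (k \<circ> h) J" using 1 2 by simp
  qed
  ultimately show "frame_iso L N" unfolding frame_iso_def by (intro exI[of _ "k \<circ> h"] conjI)
qed

lemma gelfand_part:
  assumes comp: "compact_space X" and H: "Hausdorff_space X"
  shows "frame_iso {U. openin (gelfand_top X (CX X)) U} {U. openin X U}"
proof -
  define e where "e = (\<lambda>x. restrict (\<lambda>f. f x) (CX X))"
  define G where "G = gelfand_top X (CX X)"
  have cont: "continuous_map X G e" unfolding e_def G_def by (rule ev_cont)
  have HG: "Hausdorff_space G" unfolding G_def gelfand_top_def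
    by (intro Hausdorff_space_subtopology) (simp add: Hausdorff_space_product_topology)
  have img: "e ` topspace X = topspace G"
  proof
    show "e ` topspace X \<subseteq> topspace G" using cont continuous_map_image_subset_topspace by blast
    show "topspace G \<subseteq> e ` topspace X"
    proof
      fix \<phi> assume "\<phi> \<in> topspace G"
      then have phi: "\<phi> \<in> Spec X (CX X)" by (simp add: G_def topspace_gelfand)
      then obtain x where x: "x \<in> topspace X" "\<forall>f\<in>CX X. \<phi> f = f x" using char_eval[OF comp] by blast
      have "\<phi> = e x"
        by (rule extensionalityI[of _ "CX X"]) (use phi x in \<open>auto simp: Spec_def e_def\<close>)
      then show "\<phi> \<in> e ` topspace X" using x by blast
    qed
  qed
  have inj: "inj_on e (topspace X)"
  proof
    fix x y assume xy: "x \<in> topspace X" "y \<in> topspace X" "e x = e y"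
    show "x = y"
    proof (rule ccontr)
      assume "x \<noteq> y"
      then obtain f where f: "f \<in> CX X" "f x \<noteq> f y" using separate[OF comp H xy(1,2)] by blast
      have "e x f = e y f" using xy by simp
      then show False using f by (simp add: e_def)
    qed
  qed
  have hom: "homeomorphic_map X G e"
    using continuous_imp_homeomorphic_map[OF cont comp HG img inj] .
  define P where "P V = {x \<in> topspace X. e x \<in> V}" for V
  have PO: "openin X (P V)" if "openin G V" for V
    unfolding P_def using openin_continuous_map_preimage[OF cont that] .
  have IO: "openin G (e ` U)" if "openin X U" for U
    using homeomorphic_map_openness[OF hom openin_subset[OF that]] that by simp
  have PI: "P (e ` U) = U" if "openin X U" for U
    using openin_subset[OF that] inj unfolding P_def inj_on_def by blast
  have IP: "e ` P V = V" if "openin G V" for V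
  proof
    show "e ` P V \<subseteq> V" unfolding P_def by blast
    show "V \<subseteq> e ` P V"
    proof
      fix v assume v: "v \<in> V"
      then have "v \<in> e ` topspace X" using openin_subset[OF that] img by blast
      then obtain x where "x \<in> topspace X" "v = e x" by blast
      then show "v \<in> e ` P V" using v unfolding P_def by blast
    qed
  qed
  have "bij_betw P {U. openin G U} {U. openin X U}"
  proof (rule bij_betw_byWitness[where f'="\<lambda>U. e ` U"])
    show "\<forall>a\<in>{U. openin G U}. e ` P a = a" using IP by blast
    show "\<forall>a\<in>{U. openin X U}. P (e ` a) = a" using PI by blast
    show "P ` {U. openin G U} \<subseteq> {U. openin X U}" using PO by blast
    show "(\<lambda>U. e ` U) ` {U. openin X U} \<subseteq> {U. openin G U}" using IO by blast
  qed
  moreover have "\<forall>I\<in>{U. openin G U}. \<forall>J\<in>{U. openin G U}. I \<subseteq> J \<longleftrightarrow> P I \<subseteq> P J"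
  proof (intro ballI iffI)
    fix I J assume "I \<in> {U. openin G U}" "J \<in> {U. openin G U}" "I \<subseteq> J"
    then show "P I \<subseteq> P J" unfolding P_def by blast
  next
    fix I J assume IJ: "I \<in> {U. openin G U}" "J \<in> {U. openin G U}" "P I \<subseteq> P J"
    then have "e ` P I \<subseteq> e ` P J" by blast
    then show "I \<subseteq> J" using IP IJ by simp
  qed
  ultimately show ?thesis unfolding frame_iso_def G_def by blast
qed

theorem corollary5p2:
  fixes X :: "'a topology"
  assumes "compact_space X" and "Hausdorff_space X"
  shows "frame_iso (MOframe X) {U. openin X U}"
  using frame_iso_trans[OF frame_part gelfand_part[OF assms]] .

end
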